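(* Let $p>1$ and let $A$ be a complex $r$-matrix of order $n_1\times\cdots\times n_r$. Then for every $k\in[r]$, \[ \|A\|_p\geq\left(\frac{n_k^{1/(p-1)}}{(n_1\cdots n_r)^{1/(p-1)}}\sum_{j\in[n_k]}\big|\Sigma A^{(k)}_j\big|^{p/(p-1)}\right)^{(p-1)/p}. \]
   Context: An $r$-matrix of order $n_1\times\cdots\times n_r$ is a function on $[n_1]\times\cdots\times[n_r]$ with values $a_{i_1,\ldots,i_r}$. For $k\in[r]$, $j\in[n_k]$, the slice $A^{(k)}_j$ is the $(r-1)$-matrix obtained by fixing $i_k=j$, and $\Sigma A^{(k)}_j$ is the sum of its entries. The spectral $p$-norm is $\|A\|_p=\max\{|\sum a_{i_1,\ldots,i_r}\overline{x^{(1)}_{i_1}}\cdots\overline{x^{(r)}_{i_r}}|:\mathbf{x}^{(k)}\in\mathbb{C}^{n_k},\ |\mathbf{x}^{(k)}|_p=1\ \forall k\}$. *)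

theory Defs
  imports "HOL-Analysis.Analysis"
begin

text \<open>Indices are 0-based: an r-matrix of order n_0 x ... x n_(r-1) is a function on
  the index set (PiE {0..<r} (\<lambda>k. {0..<n k})), i.e. tuples i with i k < n k for k < r
  and i k = undefined otherwise.\<close>

definition index_set :: "nat \<Rightarrow> (nat \<Rightarrow> nat) \<Rightarrow> (nat \<Rightarrow> nat) set" where
  "index_set r n = PiE {0..<r} (\<lambda>k. {0..<n k})"

definition lp_norm :: "real \<Rightarrow> nat \<Rightarrow> (nat \<Rightarrow> complex) \<Rightarrow> real" where
  "lp_norm p m x = (\<Sum>i<m. cmod (x i) powr p) powr (1 / p)"

definition mform :: "nat \<Rightarrow> (nat \<Rightarrow> nat) \<Rightarrow> ((nat \<Rightarrow> nat) \<Rightarrow> complex)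
    \<Rightarrow> (nat \<Rightarrow> nat \<Rightarrow> complex) \<Rightarrow> complex" where
  "mform r n A x = (\<Sum>i\<in>index_set r n. A i * (\<Prod>k<r. cnj (x k (i k))))"

text \<open>Spectral p-norm (the maximum is attained by compactness; we take the supremum).\<close>
definition spectral_norm :: "real \<Rightarrow> nat \<Rightarrow> (nat \<Rightarrow> nat) \<Rightarrow> ((nat \<Rightarrow> nat) \<Rightarrow> complex) \<Rightarrow> real" where
  "spectral_norm p r n A = Sup {cmod (mform r n A x) | x.
      \<forall>k<r. lp_norm p (n k) (x k) = 1}"

definition slice_sum :: "nat \<Rightarrow> (nat \<Rightarrow> nat) \<Rightarrow> ((nat \<Rightarrow> nat) \<Rightarrow> complex) \<Rightarrow> nat \<Rightarrow> nat \<Rightarrow> complex" where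
  "slice_sum r n A k j = (\<Sum>i\<in>{i\<in>index_set r n. i k = j}. A i)"

end

theory Submission
  imports Defs
begin

lemma lp_one_bound:
  assumes p: "p > 0" and h: "lp_norm p m v = 1" and j: "j < m"
  shows "cmod (v j) \<le> 1"
proof -
  let ?s = "\<Sum>i<m. cmod (v i) powr p"
  have s0: "?s \<ge> 0" by (simp add: sum_nonneg)
  have "?s powr (1/p) = 1" using h by (simp add: lp_norm_def)
  hence "(?s powr (1/p)) powr p = 1" by simp
  hence s1: "?s = 1" using s0 p by (simp add: powr_powr)
  have "cmod (v j) powr p \<le> ?s"
    by (rule member_le_sum) (use j in auto)
  hence "cmod (v j) powr p \<le> 1" using s1 by simp
  show ?thesis
  proof (rule ccontr)
    assume "\<not> cmod (v j) \<le> 1"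
    hence "1 powr p < cmod (v j) powr p" using p by (intro powr_less_mono2) auto
    thus False using \<open>cmod (v j) powr p \<le> 1\<close> by simp
  qed
qed

lemma bdd_spec:
  assumes p: "p > 0"
  shows "bdd_above {cmod (mform r n A x) | x. \<forall>k<r. lp_norm p (n k) (x k) = 1}"
proof (rule bdd_aboveI[where M="\<Sum>i\<in>index_set r n. cmod (A i)"])
  fix t assume "t \<in> {cmod (mform r n A x) | x. \<forall>k<r. lp_norm p (n k) (x k) = 1}"
  then obtain x where t: "t = cmod (mform r n A x)" and hx: "\<forall>k<r. lp_norm p (n k) (x k) = 1" by blast
  have "t \<le> (\<Sum>i\<in>index_set r n. cmod (A i * (\<Prod>k<r. cnj (x k (i k)))))"
    unfolding t mform_def by (rule norm_sum)
  also have "\<dots> \<le> (\<Sum>i\<in>index_set r n. cmod (A i))"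
  proof (rule sum_mono)
    fix i assume i: "i \<in> index_set r n"
    have "(\<Prod>k<r. cmod (cnj (x k (i k)))) \<le> 1"
    proof (rule prod_le_1)
      fix k assume k: "k \<in> {..<r}"
      have "i k < n k" using i k by (auto simp: index_set_def PiE_def Pi_def)
      thus "0 \<le> cmod (cnj (x k (i k))) \<and> cmod (cnj (x k (i k))) \<le> 1"
        using lp_one_bound[OF p] hx k by auto
    qed
    hence "cmod (\<Prod>k<r. cnj (x k (i k))) \<le> 1" by (metis prod_norm)
    thus "cmod (A i * (\<Prod>k<r. cnj (x k (i k)))) \<le> cmod (A i)"
      by (simp add: norm_mult mult_left_le)
  qed
  finally show "t \<le> (\<Sum>i\<in>index_set r n. cmod (A i))" .
qed

lemma cnj_sgn_mult: "cnj (sgn z) * z = complex_of_real (cmod z)"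
proof (cases "z = 0")
  case False
  have s: "sgn z = z / complex_of_real (cmod z)"
    by (simp add: sgn_div_norm scaleR_conv_of_real divide_inverse mult.commute)
  have c: "cnj z * z = complex_of_real ((cmod z)^2)"
    using complex_norm_square[of z] by (simp add: mult.commute)
  have "cnj (sgn z) * z = cnj z * z / complex_of_real (cmod z)" by (simp add: s)
  also have "\<dots> = complex_of_real ((cmod z)^2 / cmod z)" by (simp add: c)
  also have "\<dots> = complex_of_real (cmod z)" using False by (simp add: power2_eq_square)
  finally show ?thesis .
qed simp

theorem theorem23:
  fixes p :: real and r :: nat and n :: "nat \<Rightarrow> nat"
    and A :: "(nat \<Rightarrow> nat) \<Rightarrow> complex" and k :: nat
  assumes "p > 1"
    and "\<forall>l<r. n l > 0"
    and "k < r"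
  shows "spectral_norm p r n A \<ge>
    ((real (n k) powr (1 / (p - 1)) / real (\<Prod>l<r. n l) powr (1 / (p - 1)))
       * (\<Sum>j<n k. cmod (slice_sum r n A k j) powr (p / (p - 1)))) powr ((p - 1) / p)"
proof -
  have p: "p > 1" using assms by simp
  have p0: "p > 0" using p by simp
  define q where "q = p / (p - 1)"
  have q1: "q > 1" using p by (simp add: q_def)
  have qp: "(q - 1) * p = q" using p by (simp add: q_def field_simps)
  define S where "S j = slice_sum r n A k j" for j
  define \<Sigma> where "\<Sigma> = (\<Sum>j<n k. cmod (S j) powr q)"
  have \<Sigma>0: "\<Sigma> \<ge> 0" by (simp add: \<Sigma>_def sum_nonneg)
  define T where "T = \<Sigma> powr (1/p)"
  define c where "c l = real (n l) powr (-1/p)" for l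
  define N' where "N' = (\<Prod>l\<in>{..<r}-{k}. real (n l))"
  define C where "C = (\<Prod>l\<in>{..<r}-{k}. c l)"
  have npos: "\<And>l. l \<in> {..<r} \<Longrightarrow> real (n l) > 0" using assms(2) by auto
  have N'pos: "N' > 0" unfolding N'_def by (rule prod_pos) (use npos in auto)
  have CN: "C = N' powr (-1/p)"
    unfolding C_def N'_def c_def by (simp add: prod_powr_distrib)
  have Nprod: "real (\<Prod>l<r. n l) = real (n k) * N'"
    unfolding N'_def of_nat_prod using assms(3) by (simp add: prod.remove)
  define y where "y j = sgn (S j) * complex_of_real (cmod (S j) powr (q - 1) / T)" for j
  define x where "x l = (if l = k then y else (\<lambda>_. complex_of_real (c l)))" for l
  let ?M = "{cmod (mform r n A x) | x. \<forall>k<r. lp_norm p (n k) (x k) = 1}"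
  have bdd: "bdd_above ?M" by (rule bdd_spec[OF p0])
  have const_norm: "lp_norm p (n l) (\<lambda>_. complex_of_real (c l)) = 1" if l: "l < r" for l
  proof -
    have nl: "real (n l) > 0" using npos l by auto
    have "(\<Sum>i<n l. cmod (complex_of_real (c l)) powr p) = real (n l) * (c l) powr p"
      using nl by (simp add: c_def)
    also have "(c l) powr p = real (n l) powr (-1)"
      unfolding c_def using p0 by (simp add: powr_powr)
    also have "real (n l) * real (n l) powr (-1) = 1" using nl by (simp add: powr_minus)
    finally show ?thesis by (simp add: lp_norm_def)
  qed
  have Ifin: "finite (index_set r n)" by (simp add: index_set_def finite_PiE)
  have mf: "mform r n A x = complex_of_real C * (\<Sum>j<n k. cnj (y j) * S j)"
  proof -
    have "mform r n A x = (\<Sum>i\<in>index_set r n. complex_of_real C * (cnj (y (i k)) * A i))"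
    unfolding mform_def proof (rule sum.cong[OF refl])
      fix i
      have "(\<Prod>l<r. cnj (x l (i l))) = cnj (x k (i k)) * (\<Prod>l\<in>{..<r}-{k}. cnj (x l (i l)))"
        using assms(3) by (simp add: prod.remove)
      also have "(\<Prod>l\<in>{..<r}-{k}. cnj (x l (i l))) = (\<Prod>l\<in>{..<r}-{k}. complex_of_real (c l))"
        by (rule prod.cong) (auto simp: x_def)
      also have "\<dots> = complex_of_real C" by (simp add: C_def)
      finally show "A i * (\<Prod>l<r. cnj (x l (i l))) = complex_of_real C * (cnj (y (i k)) * A i)"
        by (simp add: x_def)
    qed
    also have "\<dots> = complex_of_real C * (\<Sum>i\<in>index_set r n. cnj (y (i k)) * A i)"
      by (simp add: sum_distrib_left)
    also have "(\<Sum>i\<in>index_set r n. cnj (y (i k)) * A i)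
        = (\<Sum>j<n k. \<Sum>i\<in>{i\<in>index_set r n. i k = j}. cnj (y (i k)) * A i)"
      by (rule sum.group[symmetric]) (use Ifin assms(3) in \<open>auto simp: index_set_def PiE_def Pi_def\<close>)
    also have "\<dots> = (\<Sum>j<n k. cnj (y j) * S j)"
      by (rule sum.cong[OF refl]) (simp add: S_def slice_sum_def sum_distrib_left)
    finally show ?thesis .
  qed
  have Sq: "cmod (S j) * cmod (S j) powr (q - 1) = cmod (S j) powr q" for j
  proof (cases "S j = 0")
    case False
    have "cmod (S j) powr q = cmod (S j) powr (1 + (q - 1))" by simp
    also have "\<dots> = cmod (S j) powr 1 * cmod (S j) powr (q - 1)" by (rule powr_add)
    also have "\<dots> = cmod (S j) * cmod (S j) powr (q - 1)" using False by simp
    finally show ?thesis by simp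
  qed (use q1 in simp)
  show ?thesis
  proof (cases "\<Sigma> = 0")
    case True
    define z where "z l = (\<lambda>_::nat. complex_of_real (c l))" for l
    have "cmod (mform r n A z) \<in> ?M" using const_norm by (auto simp: z_def)
    hence "0 \<le> spectral_norm p r n A" unfolding spectral_norm_def
      using cSup_upper[OF _ bdd] norm_ge_zero order_trans by blast
    thus ?thesis using True by (simp add: \<Sigma>_def S_def q_def)
  next
    case False
    hence \<Sigma>pos: "\<Sigma> > 0" using \<Sigma>0 by simp
    have Tpos: "T > 0" using \<Sigma>pos by (simp add: T_def)
    have ynorm: "lp_norm p (n k) y = 1"
    proof -
      have "cmod (y j) powr p = cmod (S j) powr q / \<Sigma>" for j
      proof (cases "S j = 0")
        case True then show ?thesis by (simp add: y_def)
      next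
        case False
        have "cmod (y j) = cmod (S j) powr (q - 1) / T"
        proof -
          have "cmod (y j) = cmod (sgn (S j)) * \<bar>cmod (S j) powr (q - 1) / T\<bar>"
            by (simp only: y_def norm_mult norm_of_real)
          thus ?thesis using False Tpos by (simp add: norm_sgn)
        qed
        hence "cmod (y j) powr p = (cmod (S j) powr (q - 1)) powr p / T powr p"
          using Tpos by (simp add: powr_divide)
        also have "\<dots> = cmod (S j) powr q / \<Sigma>"
          using \<Sigma>pos p0 qp by (simp add: T_def powr_powr)
        finally show ?thesis .
      qed
      hence "(\<Sum>j<n k. cmod (y j) powr p) = (\<Sum>j<n k. cmod (S j) powr q) / \<Sigma>"
        by (simp add: sum_divide_distrib)
      also have "\<dots> = 1" using \<Sigma>pos unfolding \<Sigma>_def by simp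
      finally have "(\<Sum>j<n k. cmod (y j) powr p) = 1" .
      thus ?thesis by (simp add: lp_norm_def)
    qed
    have xnorm: "\<forall>l<r. lp_norm p (n l) (x l) = 1"
      using ynorm const_norm by (simp add: x_def)
    have "(\<Sum>j<n k. cnj (y j) * S j) = complex_of_real (\<Sigma> / T)"
    proof -
      have "cnj (y j) * S j = complex_of_real (cmod (S j) powr q / T)" for j
      proof -
        have "cnj (y j) * S j = (cnj (sgn (S j)) * S j) * complex_of_real (cmod (S j) powr (q - 1) / T)"
          by (simp add: y_def)
        also have "\<dots> = complex_of_real (cmod (S j) * (cmod (S j) powr (q - 1) / T))"
          by (simp add: cnj_sgn_mult)
        also have "\<dots> = complex_of_real (cmod (S j) powr q / T)"
          using Sq[of j] by (simp add: field_simps)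
        finally show ?thesis .
      qed
      thus ?thesis by (simp add: \<Sigma>_def sum_divide_distrib)
    qed
    hence "mform r n A x = complex_of_real (C * (\<Sigma> / T))" using mf by simp
    hence "cmod (mform r n A x) = \<bar>C * (\<Sigma> / T)\<bar>" by (simp only: norm_of_real)
    hence val: "cmod (mform r n A x) = C * (\<Sigma> / T)"
      using CN N'pos Tpos \<Sigma>pos by simp
    have inM: "cmod (mform r n A x) \<in> ?M" using xnorm by blast
    have le: "C * (\<Sigma> / T) \<le> spectral_norm p r n A"
      unfolding spectral_norm_def using cSup_upper[OF inM bdd] val by simp
    have rhs: "((real (n k) powr (1 / (p - 1)) / real (\<Prod>l<r. n l) powr (1 / (p - 1))) * \<Sigma>)
                 powr ((p - 1) / p) = C * (\<Sigma> / T)"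
    proof -
      have nk: "real (n k) > 0" using npos assms(3) by auto
      have "real (n k) powr (1 / (p - 1)) / real (\<Prod>l<r. n l) powr (1 / (p - 1))
            = N' powr (- 1 / (p - 1))"
        using nk N'pos Nprod by (simp add: powr_mult powr_minus divide_inverse)
      hence "((real (n k) powr (1 / (p - 1)) / real (\<Prod>l<r. n l) powr (1 / (p - 1))) * \<Sigma>)
                 powr ((p - 1) / p) = (N' powr (- 1 / (p - 1))) powr ((p - 1) / p) * \<Sigma> powr ((p - 1) / p)"
        using N'pos \<Sigma>pos by (simp add: powr_mult)
      also have "(N' powr (- 1 / (p - 1))) powr ((p - 1) / p) = C"
        using CN N'pos p by (simp add: powr_powr)
      also have "\<Sigma> powr ((p - 1) / p) = \<Sigma> / T"
      proof -
        have "\<Sigma> powr ((p - 1) / p) = \<Sigma> powr (1 - 1/p)" using p by (simp add: field_simps)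
        also have "\<dots> = \<Sigma> / T" using \<Sigma>pos by (simp add: T_def powr_diff)
        finally show ?thesis .
      qed
      finally show ?thesis .
    qed
    show ?thesis using le rhs by (simp add: \<Sigma>_def S_def q_def)
  qed
qed

end
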